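(* Let $\mathbf K$ be a commutative field, $p,q\in\mathbb N$ and $A\in\mathrm{Rec}_{p\times q}(\mathbf K)$. The following are equivalent: (i) the set $\{A[U,W]:(U,W)\in\mathcal M_{p\times q}\}\subset\mathbf K$ is finite; (ii) for every $B\in\overline{A}^{rec}$ the set $\{B[U,W]:(U,W)\in\mathcal M_{p\times q}\}$ is finite; (iii) the recursive set-closure $\{\rho(S,T)A:(S,T)\in\mathcal M_{p\times q}\}$ is finite; (iv) the shift-monoid of $A$, i.e. the set of restrictions of all shift maps $\rho(S,T)$, $(S,T)\in\mathcal M_{p\times q}$, to $\overline{A}^{rec}$, is finite.
   Context: $\mathcal M_{p\times q}$ is the monoid of pairs $(U,W)$ of words of common length with $U$ over $\{0,\dots,p-1\}$, $W$ over $\{0,\dots,q-1\}$, under concatenation. For $A:\mathcal M_{p\times q}\to\mathbf K$ (values $A[U,W]$), shift maps act by $(\rho(S,T)A)[U,W]=A[US,WT]$. $\overline{A}^{rec}$ is the linear span of $\{\rho(S,T)A\}$ (an invariant subspace for all shift maps), and $\mathrm{Rec}_{p\times q}(\mathbf K)$ is the set of $A$ with $\dim\overline{A}^{rec}<\infty$. *)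

theory Defs
  imports Main HOL.Vector_Spaces "HOL-Library.Function_Algebras" "HOL-Library.FuncSet"
begin

text \<open>Elements of the monoid M_{p x q}: pairs of words of common length, the first
over the alphabet {0..p-1}, the second over {0..q-1}. Concatenation is list append.\<close>
definition Mon :: "nat \<Rightarrow> nat \<Rightarrow> (nat list \<times> nat list) set" where
  "Mon p q = {(U, W). length U = length W \<and> set U \<subseteq> {..<p} \<and> set W \<subseteq> {..<q}}"

text \<open>Series A : M_{p x q} -> K are represented as functions on all pairs of lists
that vanish outside M_{p x q}.\<close>
type_synonym 'k series = "nat list \<Rightarrow> nat list \<Rightarrow> 'k"

definition is_series :: "nat \<Rightarrow> nat \<Rightarrow> 'k::zero series \<Rightarrow> bool" where
  "is_series p q A \<longleftrightarrow> (\<forall>U W. (U, W) \<notin> Mon p q \<longrightarrow> A U W = 0)"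

definition rho :: "nat \<Rightarrow> nat \<Rightarrow> nat list \<Rightarrow> nat list \<Rightarrow> 'k::zero series \<Rightarrow> 'k series" where
  "rho p q S T A = (\<lambda>U W. if (U, W) \<in> Mon p q then A (U @ S) (W @ T) else 0)"

definition scaleS :: "'k::field \<Rightarrow> 'k series \<Rightarrow> 'k series" where
  "scaleS c B = (\<lambda>U W. c * B U W)"

definition recClosure :: "nat \<Rightarrow> nat \<Rightarrow> 'k::field series \<Rightarrow> 'k series set" where
  "recClosure p q A = module.span scaleS {rho p q S T A | S T. (S, T) \<in> Mon p q}"

definition fin_dim :: "'k::field series set \<Rightarrow> bool" where
  "fin_dim V \<longleftrightarrow> (\<exists>B. finite B \<and> B \<subseteq> V \<and> V \<subseteq> module.span scaleS B)"

definition Rec :: "nat \<Rightarrow> nat \<Rightarrow> 'k::field series set" where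
  "Rec p q = {A. is_series p q A \<and> fin_dim (recClosure p q A)}"

end

theory Submission
  imports Defs
begin

lemma module_scaleS: "module (scaleS :: 'k::field \<Rightarrow> 'k series \<Rightarrow> 'k series)"
  by unfold_locales (auto simp: scaleS_def fun_eq_iff algebra_simps)

interpretation M: module "scaleS :: 'k::field \<Rightarrow> 'k series \<Rightarrow> 'k series"
  by (rule module_scaleS)

lemma diff_apply2: "((f::'k::field series) - g) U W = f U W - g U W"
  by simp

lemma scaleS_apply: "scaleS c B U W = c * B U W"
  by (simp add: scaleS_def)

lemma sep:
  fixes G :: "'k::field series set"
  assumes "finite G"
  shows "\<exists>X. finite X \<and> (\<forall>B\<in>M.span G. (\<forall>(U,W)\<in>X. B U W = 0) \<longrightarrow> B = 0)"
  using assms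
proof (induction G rule: finite_induct)
  case empty
  show ?case by auto
next
  case (insert g G)
  then obtain X where X: "finite X" "\<And>B. B\<in>M.span G \<Longrightarrow> (\<forall>(U,W)\<in>X. B U W = 0) \<Longrightarrow> B = 0"
    by blast
  show ?case
  proof (cases "\<exists>B0\<in>M.span (insert g G). (\<forall>(U,W)\<in>X. B0 U W = 0) \<and> B0 \<noteq> 0")
    case False
    then show ?thesis using X(1) by blast
  next
    case True
    then obtain B0 where B0: "B0\<in>M.span (insert g G)" "\<forall>(U,W)\<in>X. B0 U W = 0" "B0 \<noteq> 0"
      by blast
    obtain c0 where c0: "B0 - scaleS c0 g \<in> M.span G" using B0(1) M.span_insert by blast
    obtain U0 W0 where UW0: "B0 U0 W0 \<noteq> 0" using B0(3) by (auto simp: fun_eq_iff)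
    have "\<forall>B\<in>M.span (insert g G). (\<forall>(U,W)\<in>insert (U0,W0) X. B U W = 0) \<longrightarrow> B = 0"
    proof (intro ballI impI)
      fix B assume B: "B \<in> M.span (insert g G)" "\<forall>(U,W)\<in>insert (U0,W0) X. B U W = 0"
      obtain c where c: "B - scaleS c g \<in> M.span G" using B(1) M.span_insert by blast
      define D where "D = scaleS c0 (B - scaleS c g) - scaleS c (B0 - scaleS c0 g)"
      have D1: "D \<in> M.span G" unfolding D_def by (rule M.span_diff[OF M.span_scale[OF c] M.span_scale[OF c0]])
      have D2: "D = scaleS c0 B - scaleS c B0"
        by (auto simp: D_def fun_eq_iff scaleS_def algebra_simps)
      have "\<forall>(U,W)\<in>X. D U W = 0" using B(2) B0(2) unfolding D2 by (fastforce simp: scaleS_def)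
      then have "D = 0" using X(2) D1 by blast
      then have "D U0 W0 = 0" by simp
      then have "c * B0 U0 W0 = 0" using B(2) by (simp add: D2 scaleS_def)
      then have "c = 0" using UW0 by simp
      moreover have "scaleS 0 g = 0" by (simp add: scaleS_def fun_eq_iff)
      ultimately have "B \<in> M.span G" using c by simp
      then show "B = 0" using X(2) B(2) by blast
    qed
    then show ?thesis using X(1) by blast
  qed
qed

lemma finite_image_factor:
  assumes "finite (g ` D)" "\<And>x y. x \<in> D \<Longrightarrow> y \<in> D \<Longrightarrow> g x = g y \<Longrightarrow> f x = f y"
  shows "finite (f ` D)"
proof -
  have "f ` D \<subseteq> (\<lambda>z. f (SOME x. x \<in> D \<and> g x = z)) ` (g ` D)"
  proof
    fix y assume "y \<in> f ` D"
    then obtain x where x: "x \<in> D" "y = f x" by blast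
    have "\<exists>x'. x' \<in> D \<and> g x' = g x" using x by blast
    then have "(SOME x'. x' \<in> D \<and> g x' = g x) \<in> D \<and> g (SOME x'. x' \<in> D \<and> g x' = g x) = g x"
      by (rule someI_ex)
    then have "f (SOME x'. x' \<in> D \<and> g x' = g x) = f x" using assms(2) x by blast
    then show "y \<in> (\<lambda>z. f (SOME x. x \<in> D \<and> g x = z)) ` (g ` D)" using x by force
  qed
  then show ?thesis using assms(1) finite_surj by blast
qed

lemma Mon_app: "(U,W) \<in> Mon p q \<Longrightarrow> (S,T) \<in> Mon p q \<Longrightarrow> (U@S, W@T) \<in> Mon p q"
  by (auto simp: Mon_def)

lemma Mon_Nil: "([],[]) \<in> Mon p q"
  by (auto simp: Mon_def)

lemma rho_comp: "(S,T) \<in> Mon p q \<Longrightarrow> rho p q S T (rho p q S' T' A) = rho p q (S@S') (T@T') A"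
  by (auto simp: rho_def fun_eq_iff Mon_app)

lemma rho_Nil: "is_series p q A \<Longrightarrow> rho p q [] [] A = A"
  by (auto simp: rho_def fun_eq_iff is_series_def)

lemma rho_add: "rho p q S T ((B::'k::field series) + C) = rho p q S T B + rho p q S T C"
  by (auto simp: rho_def fun_eq_iff)

lemma rho_scale: "rho p q S T (scaleS c (B::'k::field series)) = scaleS c (rho p q S T B)"
  by (auto simp: rho_def fun_eq_iff scaleS_def)

lemma rho_zero: "rho p q S T 0 = (0::'k::field series)"
  by (auto simp: rho_def fun_eq_iff)

theorem mainTheorem16:
  fixes A :: "'k::field series" and p q :: nat
  assumes "A \<in> Rec p q"
  shows "(finite {A U W | U W. (U, W) \<in> Mon p q}
            \<longleftrightarrow> (\<forall>B \<in> recClosure p q A. finite {B U W | U W. (U, W) \<in> Mon p q}))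
       \<and> (finite {A U W | U W. (U, W) \<in> Mon p q}
            \<longleftrightarrow> finite {rho p q S T A | S T. (S, T) \<in> Mon p q})
       \<and> (finite {A U W | U W. (U, W) \<in> Mon p q}
            \<longleftrightarrow> finite {(\<lambda>B \<in> recClosure p q A. rho p q S T B) | S T. (S, T) \<in> Mon p q})"
proof -
  define vals :: "'k series \<Rightarrow> 'k set" where "vals B = {B U W | U W. (U, W) \<in> Mon p q}" for B
  define Sh where "Sh = {rho p q S T A | S T. (S, T) \<in> Mon p q}"
  define V where "V = recClosure p q A"
  define Rs where "Rs = {(\<lambda>B \<in> V. rho p q S T B) | S T. (S, T) \<in> Mon p q}"
  have ser: "is_series p q A" and fd: "fin_dim V" using assms by (auto simp: Rec_def V_def)
  have V: "V = M.span Sh" by (simp add: V_def recClosure_def Sh_def)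
  have Sh_img: "Sh = (\<lambda>(S,T). rho p q S T A) ` Mon p q" by (auto simp: Sh_def)
  have Rs_img: "Rs = (\<lambda>(S,T). \<lambda>B \<in> V. rho p q S T B) ` Mon p q" by (auto simp: Rs_def)
  have AV: "A \<in> V" proof -
    have "A \<in> Sh" using rho_Nil[OF ser] Mon_Nil unfolding Sh_def by force
    then show ?thesis unfolding V using M.span_superset by blast
  qed
  have ShV: "Sh \<subseteq> V" unfolding V by (rule M.span_superset)
  have i_ii: "finite (vals B)" if fin: "finite (vals A)" and B: "B \<in> V" for B
  proof -
    have "B \<in> M.span Sh" using B V by simp
    then show ?thesis
    proof (induction rule: M.span_induct)
      case base
      show ?case unfolding M.subspace_def
      proof (intro conjI ballI allI)
        show "0 \<in> Collect (\<lambda>B. finite (vals B))"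
          by (auto simp: vals_def intro: finite_subset[of _ "{0}"])
        fix x y assume x: "x \<in> Collect (\<lambda>B. finite (vals B))" and y: "y \<in> Collect (\<lambda>B. finite (vals B))"
        have "vals (x + y) \<subseteq> (\<lambda>(a,b). a + b) ` (vals x \<times> vals y)"
          by (force simp: vals_def)
        then show "x + y \<in> Collect (\<lambda>B. finite (vals B))" using x y
          by (auto intro: finite_subset)
      next
        fix c x assume x: "x \<in> Collect (\<lambda>B. finite (vals B))"
        have "vals (scaleS c x) \<subseteq> (\<lambda>a. c * a) ` vals x"
          by (force simp: vals_def scaleS_def)
        then show "scaleS c x \<in> Collect (\<lambda>B. finite (vals B))" using x
          by (auto intro: finite_subset)
      qed
    next
      case (step x)
      then obtain S T where ST: "(S,T) \<in> Mon p q" "x = rho p q S T A" unfolding Sh_def by blast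
      have "vals x \<subseteq> vals A" unfolding vals_def ST(2) rho_def using ST(1) Mon_app by fastforce
      then show ?case using fin finite_subset by blast
    qed
  qed
  have iii_i: "finite (vals A)" if "finite Sh"
  proof -
    have "vals A \<subseteq> (\<lambda>B. B [] []) ` Sh"
    proof
      fix a assume "a \<in> vals A"
      then obtain U W where UW: "(U,W) \<in> Mon p q" "a = A U W" by (auto simp: vals_def)
      have "rho p q U W A [] [] = a" using UW Mon_Nil by (simp add: rho_def)
      moreover have "rho p q U W A \<in> Sh" using UW unfolding Sh_def by blast
      ultimately show "a \<in> (\<lambda>B. B [] []) ` Sh" by (metis image_eqI)
    qed
    then show ?thesis using that finite_subset by blast
  qed
  have i_iii: "finite Sh" if fin: "finite (vals A)"
  proof -
    obtain Bs where Bs: "finite Bs" "Bs \<subseteq> V" "V \<subseteq> M.span Bs" using fd by (auto simp: fin_dim_def)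
    obtain X where X: "finite X" "\<And>B. B \<in> M.span Bs \<Longrightarrow> (\<forall>(U,W)\<in>X. B U W = 0) \<Longrightarrow> B = 0"
      using sep[OF Bs(1)] by blast
    define g where "g = (\<lambda>(S,T). restrict (\<lambda>(U,W). rho p q S T A U W) X)"
    have "g ` Mon p q \<subseteq> X \<rightarrow>\<^sub>E insert 0 (vals A)"
    proof
      fix z assume "z \<in> g ` Mon p q"
      then obtain S T where ST: "(S,T) \<in> Mon p q" "z = g (S,T)" by auto
      have "rho p q S T A U W \<in> insert 0 (vals A)" for U W
      proof (cases "(U,W) \<in> Mon p q")
        case True
        then have "(U@S, W@T) \<in> Mon p q" using ST(1) Mon_app by blast
        then show ?thesis using True unfolding vals_def rho_def by auto
      qed (simp add: rho_def)
      then show "z \<in> X \<rightarrow>\<^sub>E insert 0 (vals A)"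
        unfolding ST(2) g_def by auto
    qed
    then have "finite (g ` Mon p q)" using X(1) fin
      by (meson finite_PiE finite_insert finite_subset)
    moreover have "(\<lambda>(S,T). rho p q S T A) x = (\<lambda>(S,T). rho p q S T A) y"
      if "x \<in> Mon p q" "y \<in> Mon p q" "g x = g y" for x y
    proof -
      obtain S T S' T' where xy: "x = (S,T)" "y = (S',T')" by (cases x, cases y) auto
      have m1: "rho p q S T A \<in> M.span Bs" "rho p q S' T' A \<in> M.span Bs"
        using that(1,2) xy ShV Bs(3) unfolding Sh_def by blast+
      have "\<forall>(U,W)\<in>X. (rho p q S T A - rho p q S' T' A) U W = 0"
      proof (intro ballI, clarify)
        fix U W assume "(U,W) \<in> X"
        then have "g x (U,W) = g y (U,W)" using that(3) by simp
        then show "(rho p q S T A - rho p q S' T' A) U W = 0" using \<open>(U,W) \<in> X\<close>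
          by (simp add: g_def xy)
      qed
      then have "rho p q S T A - rho p q S' T' A = 0"
        using X(2) M.span_diff[OF m1] by blast
      then show ?thesis using xy by simp
    qed
    ultimately show ?thesis unfolding Sh_img by (rule finite_image_factor)
  qed
  have iii_iv: "finite Rs" if fin: "finite Sh"
  proof -
    define g where "g = (\<lambda>(S,T). restrict (rho p q S T) Sh)"
    have "g ` Mon p q \<subseteq> Sh \<rightarrow>\<^sub>E Sh"
    proof
      fix z assume "z \<in> g ` Mon p q"
      then obtain S T where ST: "(S,T) \<in> Mon p q" "z = g (S,T)" by auto
      show "z \<in> Sh \<rightarrow>\<^sub>E Sh"
      proof (unfold ST(2) g_def, intro PiE_I)
        fix B assume "B \<in> Sh"
        then obtain S' T' where "(S',T') \<in> Mon p q" "B = rho p q S' T' A" unfolding Sh_def by blast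
        then show "(case (S, T) of (S, T) \<Rightarrow> restrict (rho p q S T) Sh) B \<in> Sh"
          using ST(1) rho_comp[OF ST(1)] Mon_app \<open>B \<in> Sh\<close> unfolding Sh_def by fastforce
      qed auto
    qed
    then have "finite (g ` Mon p q)" using fin by (meson finite_PiE finite_subset)
    moreover have "(\<lambda>(S,T). \<lambda>B \<in> V. rho p q S T B) x = (\<lambda>(S,T). \<lambda>B \<in> V. rho p q S T B) y"
      if "x \<in> Mon p q" "y \<in> Mon p q" "g x = g y" for x y
    proof -
      obtain S T S' T' where xy: "x = (S,T)" "y = (S',T')" by (cases x, cases y) auto
      have eqSh: "rho p q S T B = rho p q S' T' B" if "B \<in> Sh" for B
      proof -
        have "g x B = g y B" using \<open>g x = g y\<close> by simp
        then show ?thesis using that by (simp add: g_def xy)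
      qed
      have "rho p q S T B = rho p q S' T' B" if "B \<in> V" for B
      proof -
        have "B \<in> M.span Sh" using that V by simp
        then show ?thesis
        proof (induction rule: M.span_induct)
          case base
          show ?case unfolding M.subspace_def
            by (simp add: rho_add rho_scale rho_zero)
        next
          case (step x)
          then show ?case by (rule eqSh)
        qed
      qed
      then show ?thesis using xy by (auto simp: fun_eq_iff)
    qed
    ultimately show ?thesis unfolding Rs_img by (rule finite_image_factor)
  qed
  have iv_iii: "finite Sh" if fin: "finite Rs"
  proof -
    have "Sh \<subseteq> (\<lambda>f. f A) ` Rs"
    proof
      fix B assume "B \<in> Sh"
      then obtain S T where ST: "(S,T) \<in> Mon p q" "B = rho p q S T A" unfolding Sh_def by blast
      have "restrict (rho p q S T) V \<in> Rs" using ST(1) unfolding Rs_def by blast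
      moreover have "B = restrict (rho p q S T) V A" using AV ST(2) by simp
      ultimately show "B \<in> (\<lambda>f. f A) ` Rs" by (metis image_eqI)
    qed
    then show ?thesis using fin finite_subset by blast
  qed
  have main: "(finite (vals A) \<longleftrightarrow> (\<forall>B \<in> V. finite (vals B)))
       \<and> (finite (vals A) \<longleftrightarrow> finite Sh) \<and> (finite (vals A) \<longleftrightarrow> finite Rs)"
    using i_ii AV iii_i i_iii iii_iv iv_iii by blast
  then show ?thesis unfolding vals_def Sh_def Rs_def V_def .
qed

end
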